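(* Let $\mathbb{X}$ be an idempotent semifield as described in the context. Let $n,m\geq1$, let $\bm{p}_{j}=(p_{1j},\ldots,p_{nj})^{T}\in\mathbb{X}^{n}$, $j=1,\ldots,m$, be regular vectors, let $w_{1},\ldots,w_{m}$ be positive reals, let $h_{j},d_{j}\in\mathbb{X}\setminus\{\mathbb{0}\}$, let $c_{1},\ldots,c_{n}$ be nonzero reals, let $\bm{B}=(b_{ik})\in\mathbb{X}^{n\times n}$ (entries may equal $\mathbb{0}$), and let $\bm{f}=(f_{i}),\bm{g}=(g_{i})\in\mathbb{X}^{n}$ be regular with $\bm{f}\leq\bm{g}$. Consider the problem of minimizing over regular $\bm{x}=(x_{i})\in\mathbb{X}^{n}$ $$\bigoplus_{1\leq j\leq m}h_{j}(\bm{p}_{j}^{-}\bm{x}\oplus\bm{x}^{-}\bm{p}_{j})^{w_{j}}$$ subject to $\bm{p}_{j}^{-}\bm{x}\oplus\bm{x}^{-}\bm{p}_{j}\leq d_{j}$ ($j=1,\ldots,m$), $b_{ik}x_{k}^{c_{k}}\leq x_{i}^{c_{i}}$ ($i,k=1,\ldots,n$), and $\bm{f}\leq\bm{x}\leq\bm{g}$. Define vectors $\bm{s}=(s_{i})$, $\bm{t}=(t_{i})$ by $$s_{i}=\bigoplus_{1\leq j\leq m}d_{j}^{-|c_{i}|}p_{ij}^{c_{i}}\oplus(f_{i}^{-c_{i}}\oplus g_{i}^{-c_{i}})^{-1},\qquad t_{i}^{-1}=\bigoplus_{1\leq j\leq m}d_{j}^{-|c_{i}|}p_{ij}^{-c_{i}}\oplus(f_{i}^{c_{i}}\oplus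 g_{i}^{c_{i}})^{-1}.$$ Suppose (1) $\mathrm{Tr}(\bm{B})\leq\mathbb{1}$ and (2) $\bm{t}^{-}\bm{B}^{\ast}\bm{s}\leq\mathbb{1}$. Then the minimum value of the problem is $$\theta=\bigoplus_{1\leq i,k\leq n}\bigoplus_{1\leq j,l\leq m}\bigg(h_{j}^{\frac{|c_{i}|w_{l}}{|c_{i}|w_{l}+|c_{k}|w_{j}}}h_{l}^{\frac{|c_{k}|w_{j}}{|c_{i}|w_{l}+|c_{k}|w_{j}}}(p_{ij}^{-c_{i}}b_{ik}^{\ast}p_{kl}^{c_{k}})^{\frac{w_{j}w_{l}}{|c_{i}|w_{l}+|c_{k}|w_{j}}}\oplus h_{j}(p_{ij}^{-c_{i}}b_{ik}^{\ast}s_{k})^{w_{j}/|c_{i}|}\oplus h_{l}(t_{i}^{-1}b_{ik}^{\ast}p_{kl}^{c_{k}})^{w_{l}/|c_{k}|}\bigg),$$ where $b_{ik}^{\ast}$ are the entries of $\bm{B}^{\ast}$. Moreover, with vectors $\bm{q}=(q_{i})$, $\bm{r}=(r_{i})$ given by $$q_{i}=\bigoplus_{1\leq j\leq m}\theta^{-|c_{i}|/w_{j}}h_{j}^{|c_{i}|/w_{j}}p_{ij}^{c_{i}},\qquad r_{i}^{-1}=\bigoplus_{1\leq j\leq m}\theta^{-|c_{i}|/w_{j}}h_{j}^{|c_{i}|/w_{j}}p_{ij}^{-c_{i}},$$ all solution vectors $\bm{x}=(x_{i})$ have entries $x_{i}=y_{i}^{1/c_{i}}$, $i=1,\ldots,n$,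 where $\bm{y}=(y_{i})=\bm{B}^{\ast}\bm{v}$ and the parameter vector $\bm{v}$ satisfies $\bm{q}\oplus\bm{s}\leq\bm{v}\leq((\bm{r}^{-}\oplus\bm{t}^{-})\bm{B}^{\ast})^{-}$.
   Context: An idempotent semifield $(\mathbb{X},\oplus,\otimes,\mathbb{0},\mathbb{1})$ is a set with distinct elements $\mathbb{0},\mathbb{1}$ such that $(\mathbb{X},\oplus,\mathbb{0})$ is a commutative idempotent monoid, $(\mathbb{X}\setminus\{\mathbb{0}\},\otimes,\mathbb{1})$ is an abelian group, and $\otimes$ distributes over $\oplus$. The relation $x\leq y\iff x\oplus y=y$ is assumed to be a total order. The sign $\otimes$ is omitted; $x^{-1}$ is the inverse of $x\neq\mathbb{0}$. Powers $x^{p}$ with real exponents are assumed well defined (with $\mathbb{0}^{p}=\mathbb{0}$ for $p>0$) and obey the usual power rules. Main example: max-plus $(\mathbb{R}\cup\{-\infty\},\max,+,-\infty,0)$ with $x^{p}=px$. Vector/matrix operations use $\oplus,\otimes$; inequalities are componentwise; a vector is regular if it has no $\mathbb{0}$ entries. For nonzero $\bm{x}=(x_{i})$, $\bm{x}^{-}$ is the transposed vector with entries $x_{i}^{-1}$ if $x_{i}\neq\mathbb{0}$ and $\mathbb{0}$ otherwise. $\bm{I}$ is the identity matrix, $\bm{B}^{0}=\bm{I}$, $\bm{B}^{p}=\bm{B}\bm{B}^{p-1}$; $\mathrm{tr}\,\bm{B}=b_{11}\oplus\cdots\oplus b_{nn}$, $\mathrm{Tr}(\bm{B})=\mathrm{tr}\,\bm{B}\oplus\cdots\oplus\mathrm{tr}\,\bm{B}^{n}$,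 and $\bm{B}^{\ast}=\bm{I}\oplus\bm{B}\oplus\cdots\oplus\bm{B}^{n-1}$. *)

theory Defs
  imports Main "HOL.Real"
begin

text \<open>The idempotent addition is max w.r.t. the total order (x <= y iff x + y = y),
  the multiplication is the type-class multiplication, zero is the least element,
  and nonzero elements form an abelian group under multiplication.
  The real power is the parameter rpw.\<close>

class idem_semifield = linorder + comm_monoid_mult + zero + inverse +
  fixes rpw :: "'a \<Rightarrow> real \<Rightarrow> 'a"
  assumes sf_zero_neq_one: "(0::'a) \<noteq> 1"
    and sf_zero_least: "0 \<le> x"
    and sf_mult_zero: "0 * x = 0"
    and sf_right_inverse: "x \<noteq> 0 \<Longrightarrow> x * inverse x = 1"
    and sf_distrib: "x * max y z = max (x * y) (x * z)"
    and rpw_zero_base: "p > 0 \<Longrightarrow> rpw 0 p = 0"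
    and rpw_one: "rpw x 1 = x"
    and rpw_add: "x \<noteq> 0 \<Longrightarrow> rpw x (p + q) = rpw x p * rpw x q"
    and rpw_rpw: "x \<noteq> 0 \<Longrightarrow> rpw (rpw x p) q = rpw x (p * q)"
    and rpw_mult_base: "x \<noteq> 0 \<Longrightarrow> y \<noteq> 0 \<Longrightarrow> rpw (x * y) p = rpw x p * rpw y p"
    and rpw_mono: "p > 0 \<Longrightarrow> x \<le> y \<Longrightarrow> rpw x p \<le> rpw y p"

section \<open>Vectors and matrices (indices 0..n-1, functions on nat)\<close>

definition ssum :: "('b \<Rightarrow> 'a::idem_semifield) \<Rightarrow> 'b set \<Rightarrow> 'a" where
  "ssum f A = Max (insert 0 (f ` A))"

definition dotp :: "nat \<Rightarrow> (nat \<Rightarrow> 'a::idem_semifield) \<Rightarrow> (nat \<Rightarrow> 'a) \<Rightarrow> 'a" where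
  "dotp n x y = ssum (\<lambda>i. x i * y i) {..<n}"

definition mmult :: "nat \<Rightarrow> (nat \<Rightarrow> nat \<Rightarrow> 'a::idem_semifield) \<Rightarrow> (nat \<Rightarrow> nat \<Rightarrow> 'a) \<Rightarrow> nat \<Rightarrow> nat \<Rightarrow> 'a" where
  "mmult n A B i k = ssum (\<lambda>j. A i j * B j k) {..<n}"

definition mvmult :: "nat \<Rightarrow> (nat \<Rightarrow> nat \<Rightarrow> 'a::idem_semifield) \<Rightarrow> (nat \<Rightarrow> 'a) \<Rightarrow> nat \<Rightarrow> 'a" where
  "mvmult n A x i = ssum (\<lambda>k. A i k * x k) {..<n}"

definition vmmult :: "nat \<Rightarrow> (nat \<Rightarrow> 'a::idem_semifield) \<Rightarrow> (nat \<Rightarrow> nat \<Rightarrow> 'a) \<Rightarrow> nat \<Rightarrow> 'a" where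
  "vmmult n x A k = ssum (\<lambda>i. x i * A i k) {..<n}"

definition mid :: "nat \<Rightarrow> nat \<Rightarrow> 'a::idem_semifield" where
  "mid i k = (if i = k then 1 else 0)"

fun mpow :: "nat \<Rightarrow> (nat \<Rightarrow> nat \<Rightarrow> 'a::idem_semifield) \<Rightarrow> nat \<Rightarrow> nat \<Rightarrow> nat \<Rightarrow> 'a" where
  "mpow n B 0 = mid"
| "mpow n B (Suc p) = mmult n B (mpow n B p)"

definition kstar :: "nat \<Rightarrow> (nat \<Rightarrow> nat \<Rightarrow> 'a::idem_semifield) \<Rightarrow> nat \<Rightarrow> nat \<Rightarrow> 'a" where
  "kstar n B i k = ssum (\<lambda>p. mpow n B p i k) {..<n}"

definition mtr :: "nat \<Rightarrow> (nat \<Rightarrow> nat \<Rightarrow> 'a::idem_semifield) \<Rightarrow> 'a" where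
  "mtr n B = ssum (\<lambda>i. B i i) {..<n}"

definition Tr :: "nat \<Rightarrow> (nat \<Rightarrow> nat \<Rightarrow> 'a::idem_semifield) \<Rightarrow> 'a" where
  "Tr n B = ssum (\<lambda>p. mtr n (mpow n B p)) {1..n}"

definition vconj :: "(nat \<Rightarrow> 'a::idem_semifield) \<Rightarrow> nat \<Rightarrow> 'a" where
  "vconj x i = (if x i = 0 then 0 else inverse (x i))"

definition regular :: "nat \<Rightarrow> (nat \<Rightarrow> 'a::idem_semifield) \<Rightarrow> bool" where
  "regular n x \<longleftrightarrow> (\<forall>i<n. x i \<noteq> 0)"

text \<open>P i j is the i-th entry of p_j. The term p_j^- x + x^- p_j.\<close>
definition dev :: "nat \<Rightarrow> (nat \<Rightarrow> nat \<Rightarrow> 'a::idem_semifield) \<Rightarrow> nat \<Rightarrow> (nat \<Rightarrow> 'a) \<Rightarrow> 'a" where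
  "dev n P j x = max (dotp n (vconj (\<lambda>i. P i j)) x) (dotp n (vconj x) (\<lambda>i. P i j))"

definition objective :: "nat \<Rightarrow> nat \<Rightarrow> (nat \<Rightarrow> nat \<Rightarrow> 'a::idem_semifield) \<Rightarrow> (nat \<Rightarrow> real)
    \<Rightarrow> (nat \<Rightarrow> 'a) \<Rightarrow> (nat \<Rightarrow> 'a) \<Rightarrow> 'a" where
  "objective n m P w h x = ssum (\<lambda>j. h j * rpw (dev n P j x) (w j)) {..<m}"

definition feasible :: "nat \<Rightarrow> nat \<Rightarrow> (nat \<Rightarrow> nat \<Rightarrow> 'a::idem_semifield) \<Rightarrow> (nat \<Rightarrow> 'a)
    \<Rightarrow> (nat \<Rightarrow> real) \<Rightarrow> (nat \<Rightarrow> nat \<Rightarrow> 'a) \<Rightarrow> (nat \<Rightarrow> 'a) \<Rightarrow> (nat \<Rightarrow> 'a) \<Rightarrow> (nat \<Rightarrow> 'a) \<Rightarrow> bool" where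
  "feasible n m P d c B f g x \<longleftrightarrow>
     regular n x \<and>
     (\<forall>j<m. dev n P j x \<le> d j) \<and>
     (\<forall>i<n. \<forall>k<n. B i k * rpw (x k) (c k) \<le> rpw (x i) (c i)) \<and>
     (\<forall>i<n. f i \<le> x i \<and> x i \<le> g i)"

end

theory Submission
  imports Defs
begin

lemma mult_mono_l: "(a::'a::idem_semifield) \<le> b \<Longrightarrow> c * a \<le> c * b"
proof -
  assume "a \<le> b"
  hence "c * b = max (c*a) (c*b)" using sf_distrib[of c a b] by (simp add: max_def)
  thus ?thesis by (metis max.cobounded1)
qed

lemma mult_mono_r: "(a::'a::idem_semifield) \<le> b \<Longrightarrow> a * c \<le> b * c"
  using mult_mono_l[of a b c] by (simp add: mult.commute)

lemma mult_mono2: "(a::'a::idem_semifield) \<le> b \<Longrightarrow> c \<le> d \<Longrightarrow> a * c \<le> b * d"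
  by (meson mult_mono_l mult_mono_r order_trans)

lemma mult_zero_r[simp]: "(x::'a::idem_semifield) * 0 = 0"
  using sf_mult_zero[of x] by (simp add: mult.commute)

lemma mult_zero_l[simp]: "0 * (x::'a::idem_semifield) = 0"
  using sf_mult_zero .

lemma zero_le[simp]: "0 \<le> (x::'a::idem_semifield)"
  by (rule sf_zero_least)

lemma le_zero_iff[simp]: "(x::'a::idem_semifield) \<le> 0 \<longleftrightarrow> x = 0"
  using sf_zero_least[of x] order.antisym by blast

lemma left_inverse: "(x::'a::idem_semifield) \<noteq> 0 \<Longrightarrow> inverse x * x = 1"
  using sf_right_inverse by (simp add: mult.commute)

lemma mult_nz: "(x::'a::idem_semifield) \<noteq> 0 \<Longrightarrow> y \<noteq> 0 \<Longrightarrow> x * y \<noteq> 0"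
proof
  assume a: "x \<noteq> 0" "y \<noteq> 0" "x * y = 0"
  have "inverse x * (x * y) = y" using a(1) by (simp add: mult.assoc[symmetric] left_inverse)
  with a show False by simp
qed

lemma mult_eq_0_iff: "(x::'a::idem_semifield) * y = 0 \<longleftrightarrow> x = 0 \<or> y = 0"
  using mult_nz by auto

lemma one_nz[simp]: "(1::'a::idem_semifield) \<noteq> 0"
  using sf_zero_neq_one by metis

lemma inv_unique: "(a::'a::idem_semifield) * b = 1 \<Longrightarrow> inverse a = b"
proof -
  assume h: "a * b = 1"
  hence "a \<noteq> 0" using sf_zero_neq_one by force
  hence "inverse a = inverse a * (a * b)" using h by simp
  also have "\<dots> = b" using \<open>a\<noteq>0\<close> by (simp add: mult.assoc[symmetric] left_inverse)
  finally show ?thesis .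
qed

lemma inv_nz: "(x::'a::idem_semifield) \<noteq> 0 \<Longrightarrow> inverse x \<noteq> 0"
  using sf_right_inverse[of x] by (metis mult_zero_r one_nz)

lemma inv_inv[simp]: "(x::'a::idem_semifield) \<noteq> 0 \<Longrightarrow> inverse (inverse x) = x"
  by (rule inv_unique) (simp add: left_inverse)

lemma inv_one[simp]: "inverse (1::'a::idem_semifield) = 1"
  by (rule inv_unique) simp

lemma inv_mult: "(x::'a::idem_semifield) \<noteq> 0 \<Longrightarrow> y \<noteq> 0 \<Longrightarrow> inverse (x * y) = inverse x * inverse y"
  apply (rule inv_unique)
  by (metis mult.assoc mult.left_commute mult_1_right sf_right_inverse)

lemma le_div_iff: "(c::'a::idem_semifield) \<noteq> 0 \<Longrightarrow> c * a \<le> b \<longleftrightarrow> a \<le> inverse c * b"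
proof
  assume "c \<noteq> 0" "c * a \<le> b"
  hence "inverse c * (c * a) \<le> inverse c * b" by (intro mult_mono_l) auto
  thus "a \<le> inverse c * b" using \<open>c\<noteq>0\<close> by (simp add: mult.assoc[symmetric] left_inverse)
next
  assume "c \<noteq> 0" "a \<le> inverse c * b"
  hence "c * a \<le> c * (inverse c * b)" by (intro mult_mono_l) auto
  thus "c * a \<le> b" using \<open>c\<noteq>0\<close> by (simp add: mult.assoc[symmetric] sf_right_inverse)
qed

lemma le_inv_iff: "(c::'a::idem_semifield) \<noteq> 0 \<Longrightarrow> a \<le> inverse c \<longleftrightarrow> c * a \<le> 1"
  using le_div_iff[of c a 1] by simp

lemma mult_cancel_le: "(c::'a::idem_semifield) \<noteq> 0 \<Longrightarrow> c * a \<le> c * b \<longleftrightarrow> a \<le> b"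
  using le_div_iff[of c a "c*b"] by (simp add: mult.assoc[symmetric] left_inverse)

lemma inv_le_iff: "(x::'a::idem_semifield) \<noteq> 0 \<Longrightarrow> y \<noteq> 0 \<Longrightarrow> inverse x \<le> inverse y \<longleftrightarrow> y \<le> x"
proof -
  assume x: "x \<noteq> 0" and y: "y \<noteq> 0"
  have "inverse x \<le> inverse y \<longleftrightarrow> y * inverse x \<le> 1"
    using le_inv_iff[OF y] by simp
  also have "\<dots> \<longleftrightarrow> inverse x * y \<le> inverse x * x" using x by (simp add: mult.commute sf_right_inverse)
  also have "\<dots> \<longleftrightarrow> y \<le> x" using mult_cancel_le[OF inv_nz[OF x]] .
  finally show ?thesis .
qed

lemma max_mult_r: "max (a::'a::idem_semifield) b * c = max (a * c) (b * c)"
  using sf_distrib[of c a b] by (simp add: mult.commute)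

lemma rpw_0: "(x::'a::idem_semifield) \<noteq> 0 \<Longrightarrow> rpw x 0 = 1"
proof -
  assume x: "x \<noteq> 0"
  have "x = x * rpw x 0" using rpw_add[OF x, of 1 0] by (simp add: rpw_one)
  hence "inverse x * x = inverse x * x * rpw x 0" by (simp add: mult.assoc)
  thus ?thesis using x by (simp add: left_inverse)
qed

lemma rpw_nz: "(x::'a::idem_semifield) \<noteq> 0 \<Longrightarrow> rpw x p \<noteq> 0"
  by (metis add.right_inverse mult_zero_l one_nz rpw_0 rpw_add)

lemma rpw_neg: "(x::'a::idem_semifield) \<noteq> 0 \<Longrightarrow> rpw x (- p) = inverse (rpw x p)"
  by (metis add.right_inverse inv_unique rpw_0 rpw_add)

lemma rpw_one_base[simp]: "rpw 1 p = (1::'a::idem_semifield)"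
proof -
  have "rpw 1 p = rpw 1 p * (rpw 1 p::'a)" using rpw_mult_base[of 1 1 p] by simp
  hence "inverse (rpw 1 p) * rpw 1 p = inverse (rpw 1 p) * rpw 1 p * (rpw 1 p::'a)" by (simp add: mult.assoc)
  thus ?thesis using left_inverse[OF rpw_nz[OF one_nz, of p]] by (metis mult_1_left)
qed

lemma rpw_inv: "(x::'a::idem_semifield) \<noteq> 0 \<Longrightarrow> rpw (inverse x) p = inverse (rpw x p)"
  by (metis inv_nz inv_unique rpw_mult_base rpw_one_base sf_right_inverse)

lemma rpw_mult: "p > 0 \<Longrightarrow> rpw ((x::'a::idem_semifield) * y) p = rpw x p * rpw y p"
  by (metis mult_zero_l mult_zero_r rpw_mult_base rpw_zero_base)

lemma rpw_rpw': "p > 0 \<Longrightarrow> q > 0 \<Longrightarrow> rpw (rpw (x::'a::idem_semifield) p) q = rpw x (p * q)"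
  by (metis mult_pos_pos rpw_rpw rpw_zero_base)

lemma rpw_le_iff: assumes p: "p > 0" shows "rpw (x::'a::idem_semifield) p \<le> rpw y p \<longleftrightarrow> x \<le> y"
proof
  assume "rpw x p \<le> rpw y p"
  hence "rpw (rpw x p) (1/p) \<le> rpw (rpw y p) (1/p)" using rpw_mono[of "1/p" "rpw x p" "rpw y p"] p by simp
  moreover have e: "p * (1/p) = 1" using p by simp
  have "rpw (rpw x p) (1/p) = x" "rpw (rpw y p) (1/p) = y"
    using p rpw_rpw'[of p "1/p" x] rpw_rpw'[of p "1/p" y] by (simp_all add: e rpw_one)
  ultimately show "x \<le> y" by simp
qed (rule rpw_mono[OF p])

lemma rpw_eq0_iff: "p > 0 \<Longrightarrow> rpw (x::'a::idem_semifield) p = 0 \<longleftrightarrow> x = 0"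
  using rpw_nz rpw_zero_base by blast

lemma rpw_le_iff_neg: "p < 0 \<Longrightarrow> (x::'a::idem_semifield) \<noteq> 0 \<Longrightarrow> y \<noteq> 0 \<Longrightarrow> rpw x p \<le> rpw y p \<longleftrightarrow> y \<le> x"
proof -
  assume p: "p < 0" and x: "x \<noteq> 0" and y: "y \<noteq> 0"
  have "rpw x p = inverse (rpw x (-p))" "rpw y p = inverse (rpw y (-p))"
    using rpw_neg[OF x, of "-p"] rpw_neg[OF y, of "-p"] by auto
  hence "rpw x p \<le> rpw y p \<longleftrightarrow> rpw y (-p) \<le> rpw x (-p)"
    using inv_le_iff[OF rpw_nz[OF x] rpw_nz[OF y]] by simp
  also have "\<dots> \<longleftrightarrow> y \<le> x" using p by (simp add: rpw_le_iff)
  finally show ?thesis .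
qed

lemma rpw_max: "p > 0 \<Longrightarrow> rpw (max (x::'a::idem_semifield) y) p = max (rpw x p) (rpw y p)"
  by (metis max.absorb_iff2 max_def rpw_le_iff)

lemma rpw_le1_iff: "p > 0 \<Longrightarrow> rpw (x::'a::idem_semifield) p \<le> 1 \<longleftrightarrow> x \<le> 1"
  using rpw_le_iff[of p x 1] by simp

lemma ssum_empty[simp]: "ssum f {} = (0::'a::idem_semifield)"
  by (simp add: ssum_def)

lemma ssum_insert: "finite A \<Longrightarrow> ssum f (insert a A) = max (f a) (ssum (f::_\<Rightarrow>'a::idem_semifield) A)"
proof -
  assume "finite A"
  have "insert 0 (f ` insert a A) = insert (f a) (insert 0 (f ` A))" by auto
  thus ?thesis unfolding ssum_def using \<open>finite A\<close> by (metis Max_insert finite_imageI finite_insert insert_not_empty)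
qed

lemma ssum_upper: "finite A \<Longrightarrow> a \<in> A \<Longrightarrow> (f a::'a::idem_semifield) \<le> ssum f A"
  by (simp add: ssum_def)

lemma ssum_le_iff: "finite A \<Longrightarrow> ssum f A \<le> (z::'a::idem_semifield) \<longleftrightarrow> (\<forall>a\<in>A. f a \<le> z)"
  by (simp add: ssum_def)

lemma ssum_mult: "finite A \<Longrightarrow> (c::'a::idem_semifield) * ssum f A = ssum (\<lambda>a. c * f a) A"
  by (induct A rule: finite_induct) (simp_all add: ssum_insert sf_distrib)

lemma ssum_mult_r: "finite A \<Longrightarrow> ssum f A * (c::'a::idem_semifield) = ssum (\<lambda>a. f a * c) A"
  using ssum_mult[of A c f] by (simp add: mult.commute)

lemma ssum_attained: "finite A \<Longrightarrow> ssum f A = (0::'a::idem_semifield) \<or> (\<exists>a\<in>A. ssum f A = f a)"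
proof -
  assume "finite A"
  hence "Max (insert 0 (f ` A)) \<in> insert 0 (f ` A)" by (intro Max_in) auto
  thus ?thesis by (auto simp: ssum_def)
qed

lemma ssum_nz: "finite A \<Longrightarrow> a \<in> A \<Longrightarrow> (f a::'a::idem_semifield) \<noteq> 0 \<Longrightarrow> ssum f A \<noteq> 0"
  by (metis ssum_upper le_zero_iff)

lemma mpow_Suc': "mpow n B (Suc p) i k = ssum (\<lambda>j. B i j * mpow n B p j k) {..<n}"
  by (simp add: mmult_def)

lemma walk_le:
  "\<forall>\<nu>. \<nu> 0 = i \<longrightarrow> \<nu> p = k \<longrightarrow> (\<forall>t\<le>p. \<nu> t < n) \<longrightarrow>
     prod (\<lambda>t. (B::nat\<Rightarrow>nat\<Rightarrow>'a::idem_semifield) (\<nu> t) (\<nu> (Suc t))) {..<p} \<le> mpow n B p i k"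
proof (induction p arbitrary: i)
  case 0
  then show ?case by (auto simp: mid_def)
next
  case (Suc p)
  show ?case
  proof (intro allI impI)
    fix \<nu> :: "nat \<Rightarrow> nat"
    assume h: "\<nu> 0 = i" "\<nu> (Suc p) = k" "\<forall>t\<le>Suc p. \<nu> t < n"
    have "prod (\<lambda>t. B (\<nu> t) (\<nu> (Suc t))) {..<Suc p}
        = B (\<nu> 0) (\<nu> 1) * prod (\<lambda>t. B (\<nu> (Suc t)) (\<nu> (Suc (Suc t)))) {..<p}"
      unfolding prod.lessThan_Suc_shift by simp
    also have "\<dots> \<le> B i (\<nu> 1) * mpow n B p (\<nu> 1) k"
      using Suc.IH[of "\<nu> 1"] h by (auto intro!: mult_mono_l)
    also have "\<dots> \<le> mpow n B (Suc p) i k"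
      unfolding mpow_Suc' using h by (intro ssum_upper[where f="\<lambda>j. B i j * mpow n B p j k"]) auto
    finally show "prod (\<lambda>t. B (\<nu> t) (\<nu> (Suc t))) {..<Suc p} \<le> mpow n B (Suc p) i k" .
  qed
qed

lemma walk_ex:
  "mpow n B p i k = (0::'a::idem_semifield) \<or> (\<exists>\<nu>. \<nu> 0 = i \<and> \<nu> p = k \<and> (\<forall>t\<le>p. 0 < t \<longrightarrow> \<nu> t < n) \<and>
     mpow n B p i k \<le> prod (\<lambda>t. B (\<nu> t) (\<nu> (Suc t))) {..<p})"
proof (induction p arbitrary: i)
  case 0
  show ?case
  proof (cases "i = k")
    case True
    then show ?thesis by (intro disjI2 exI[of _ "\<lambda>_. i"]) (auto simp: mid_def)
  qed (auto simp: mid_def)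
next
  case (Suc p)
  show ?case
  proof (cases "mpow n B (Suc p) i k = 0")
    case False
    then obtain j where j: "j < n" "mpow n B (Suc p) i k = B i j * mpow n B p j k"
      using ssum_attained[of "{..<n}" "\<lambda>j. B i j * mpow n B p j k"] unfolding mpow_Suc' by auto
    hence "mpow n B p j k \<noteq> 0" using False by auto
    then obtain \<nu> where nu: "\<nu> 0 = j" "\<nu> p = k" "\<forall>t\<le>p. 0 < t \<longrightarrow> \<nu> t < n"
      "mpow n B p j k \<le> prod (\<lambda>t. B (\<nu> t) (\<nu> (Suc t))) {..<p}"
      using Suc.IH[of j] by auto
    define \<mu> where "\<mu> t = (if t = 0 then i else \<nu> (t - 1))" for t
    have "prod (\<lambda>t. B (\<mu> t) (\<mu> (Suc t))) {..<Suc p}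
        = B i j * prod (\<lambda>t. B (\<nu> t) (\<nu> (Suc t))) {..<p}"
      unfolding prod.lessThan_Suc_shift by (simp add: \<mu>_def nu(1))
    moreover have "\<forall>t\<le>Suc p. 0 < t \<longrightarrow> \<mu> t < n"
    proof (intro allI impI)
      fix t assume t: "t \<le> Suc p" "0 < t"
      show "\<mu> t < n"
      proof (cases "t = 1")
        case True then show ?thesis using nu(1) j(1) by (simp add: \<mu>_def)
      next
        case False
        hence "0 < t - 1" "t - 1 \<le> p" using t by auto
        then show ?thesis using nu(3) t by (simp add: \<mu>_def)
      qed
    qed
    moreover have "\<mu> 0 = i" "\<mu> (Suc p) = k" using nu by (auto simp: \<mu>_def)
    ultimately show ?thesis using j(2) nu(4) by (intro disjI2 exI[of _ \<mu>]) (auto intro: mult_mono_l)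
  qed simp
qed

lemma mpow_n_le:
  fixes B :: "nat \<Rightarrow> nat \<Rightarrow> 'a::idem_semifield"
  assumes tr: "Tr n B \<le> 1" and i: "i < n" and k: "k < n"
  shows "\<exists>p<n. mpow n B n i k \<le> mpow n B p i k"
proof (cases "mpow n B n i k = 0")
  case True then show ?thesis using i by auto
next
  case False
  then obtain \<nu> where nu: "\<nu> 0 = i" "\<nu> n = k" "\<forall>t\<le>n. 0 < t \<longrightarrow> \<nu> t < n"
      "mpow n B n i k \<le> prod (\<lambda>t. B (\<nu> t) (\<nu> (Suc t))) {..<n}"
    using walk_ex[of n B n i k] by auto
  have rng: "\<forall>t\<le>n. \<nu> t < n" using nu(1,3) i by (metis neq0_conv)
  have "\<not> inj_on \<nu> {..n}"
  proof
    assume "inj_on \<nu> {..n}"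
    moreover have "\<nu> ` {..n} \<subseteq> {..<n}" using rng by auto
    ultimately have "card {..n} \<le> card {..<n}" by (intro card_inj_on_le) auto
    thus False by simp
  qed
  then obtain a b where ab: "a \<le> n" "b \<le> n" "a \<noteq> b" "\<nu> a = \<nu> b"
    unfolding inj_on_def by auto
  obtain a b where ab: "a < b" "b \<le> n" "\<nu> a = \<nu> b"
  proof (cases "a < b")
    case True then show ?thesis using ab that by auto
  next
    case False then show ?thesis using ab that[of b a] by auto
  qed
  define L where "L = b - a"
  have L: "0 < L" "L \<le> n" "b = a + L" using ab by (auto simp: L_def)
  define W where "W = (\<lambda>t. B (\<nu> t) (\<nu> (Suc t)))"
  have split: "prod W {0..<n} = prod W {0..<a} * prod W {a..<b} * prod W {b..<n}"
    using ab by (simp add: prod.atLeastLessThan_concat)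
  have "prod W {a..<b} = prod (\<lambda>t. W (t + a)) {0..<L}"
    using prod.shift_bounds_nat_ivl[of W 0 a L] L by (simp add: add.commute)
  also have "\<dots> = prod (\<lambda>t. B (\<nu> (t + a)) (\<nu> (Suc t + a))) {..<L}"
    by (simp add: W_def atLeast0LessThan)
  also have "\<dots> \<le> mpow n B L (\<nu> a) (\<nu> a)"
    using walk_le[of "\<nu> a" L "\<nu> a" n B] rng ab L
    by (auto simp: add.commute elim!: allE[of _ "\<lambda>t. \<nu> (t + a)"])
  also have "\<dots> \<le> mtr n (mpow n B L)"
    unfolding mtr_def using rng ab by (intro ssum_upper[where f="\<lambda>i. mpow n B L i i"]) auto
  also have "\<dots> \<le> Tr n B"
    unfolding Tr_def using L by (intro ssum_upper[where f="\<lambda>p. mtr n (mpow n B p)"]) auto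
  finally have cyc: "prod W {a..<b} \<le> 1" using tr by simp
  define \<mu> where "\<mu> t = (if t \<le> a then \<nu> t else \<nu> (t + L))" for t
  have "prod (\<lambda>t. B (\<mu> t) (\<mu> (Suc t))) {0..<n - L}
     = prod (\<lambda>t. B (\<mu> t) (\<mu> (Suc t))) {0..<a} * prod (\<lambda>t. B (\<mu> t) (\<mu> (Suc t))) {a..<n-L}"
    using ab L by (simp add: prod.atLeastLessThan_concat)
  also have "prod (\<lambda>t. B (\<mu> t) (\<mu> (Suc t))) {0..<a} = prod W {0..<a}"
    by (rule prod.cong) (auto simp: \<mu>_def W_def)
  also have "prod (\<lambda>t. B (\<mu> t) (\<mu> (Suc t))) {a..<n-L} = prod (\<lambda>t. W (t + L)) {a..<n-L}"
    by (rule prod.cong) (use ab L in \<open>auto simp: \<mu>_def W_def\<close>)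
  also have "\<dots> = prod W {b..<n}"
    using prod.shift_bounds_nat_ivl[of W a L "n - L"] L ab by simp
  finally have mu_eq: "prod (\<lambda>t. B (\<mu> t) (\<mu> (Suc t))) {..<n - L} = prod W {0..<a} * prod W {b..<n}"
    by (simp add: atLeast0LessThan)
  have "mpow n B n i k \<le> prod W {0..<n}" using nu(4) by (simp add: W_def atLeast0LessThan)
  also have "\<dots> \<le> prod W {0..<a} * 1 * prod W {b..<n}"
    unfolding split by (intro mult_mono_r mult_mono_l cyc)
  also have "\<dots> = prod (\<lambda>t. B (\<mu> t) (\<mu> (Suc t))) {..<n - L}" using mu_eq by simp
  also have "\<dots> \<le> mpow n B (n - L) i k"
  proof -
    have "\<mu> 0 = i" using nu(1) by (simp add: \<mu>_def)
    moreover have "\<mu> (n - L) = k"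
    proof (cases "n - L \<le> a")
      case True
      hence "n - L = a" "a + L = n" using ab L by auto
      then show ?thesis using nu(2) ab L by (simp add: \<mu>_def)
    next
      case False then show ?thesis using nu(2) L by (simp add: \<mu>_def)
    qed
    moreover have "\<forall>t\<le>n - L. \<mu> t < n" using rng L by (auto simp: \<mu>_def)
    ultimately show ?thesis using walk_le[of i "n - L" k n B] by blast
  qed
  finally show ?thesis using L by (intro exI[of _ "n - L"]) auto
qed

lemma kstar_diag: "i < n \<Longrightarrow> (1::'a::idem_semifield) \<le> kstar n B i i"
  unfolding kstar_def using ssum_upper[of "{..<n}" 0 "\<lambda>p. mpow n B p i i"] by (simp add: mid_def)

lemma mpow_le_kstar: "p < n \<Longrightarrow> mpow n B p i k \<le> (kstar n B i k::'a::idem_semifield)"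
  unfolding kstar_def by (rule ssum_upper[where f="\<lambda>p. mpow n B p i k"]) auto

lemma kstar_closed:
  fixes B :: "nat \<Rightarrow> nat \<Rightarrow> 'a::idem_semifield"
  assumes tr: "Tr n B \<le> 1" and "i < n" "j < n" "k < n"
  shows "B i j * kstar n B j k \<le> kstar n B i k"
proof -
  have "B i j * kstar n B j k = ssum (\<lambda>p. B i j * mpow n B p j k) {..<n}"
    unfolding kstar_def by (simp add: ssum_mult)
  also have "\<dots> \<le> kstar n B i k"
  proof (subst ssum_le_iff, simp, intro ballI)
    fix p assume p: "p \<in> {..<n}"
    have "B i j * mpow n B p j k \<le> mpow n B (Suc p) i k"
      unfolding mpow_Suc' using assms by (intro ssum_upper[where f="\<lambda>j. B i j * mpow n B p j k"]) auto
    also have "\<dots> \<le> kstar n B i k"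
    proof (cases "Suc p < n")
      case True then show ?thesis by (rule mpow_le_kstar)
    next
      case False
      hence "Suc p = n" using p by auto
      then obtain q where "q < n" "mpow n B (Suc p) i k \<le> mpow n B q i k"
        using mpow_n_le[OF tr \<open>i<n\<close> \<open>k<n\<close>] by auto
      then show ?thesis using mpow_le_kstar[of q n B i k] by auto
    qed
    finally show "B i j * mpow n B p j k \<le> kstar n B i k" .
  qed
  finally show ?thesis .
qed

lemma mpow_sub:
  fixes B :: "nat \<Rightarrow> nat \<Rightarrow> 'a::idem_semifield"
  assumes y: "\<forall>i<n. \<forall>k<n. B i k * y k \<le> y i"
  shows "i < n \<Longrightarrow> k < n \<Longrightarrow> mpow n B p i k * y k \<le> y i"
proof (induction p arbitrary: i)
  case 0 then show ?case by (simp add: mid_def)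
next
  case (Suc p)
  show ?case unfolding mpow_Suc' ssum_mult_r[OF finite_lessThan]
  unfolding ssum_le_iff[OF finite_lessThan]
  proof (intro ballI)
    fix j assume j: "j \<in> {..<n}"
    hence j: "j < n" by simp
    have "B i j * mpow n B p j k * y k = B i j * (mpow n B p j k * y k)" by (simp add: mult.assoc)
    also have "\<dots> \<le> B i j * y j" using Suc.IH[OF j] Suc.prems by (intro mult_mono_l) auto
    also have "\<dots> \<le> y i" using y Suc.prems j by auto
    finally show "B i j * mpow n B p j k * y k \<le> y i" .
  qed
qed

lemma kstar_sub:
  fixes B :: "nat \<Rightarrow> nat \<Rightarrow> 'a::idem_semifield"
  assumes y: "\<forall>i<n. \<forall>k<n. B i k * y k \<le> y i" and "i < n" "k < n"
  shows "kstar n B i k * y k \<le> y i"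
  unfolding kstar_def ssum_mult_r[OF finite_lessThan] using mpow_sub[OF y] assms(2,3)
  by (subst ssum_le_iff) auto

lemma kstar_fix:
  fixes B :: "nat \<Rightarrow> nat \<Rightarrow> 'a::idem_semifield"
  assumes y: "\<forall>i<n. \<forall>k<n. B i k * y k \<le> y i" and "i < n"
  shows "mvmult n (kstar n B) y i = y i"
proof (rule order.antisym)
  show "mvmult n (kstar n B) y i \<le> y i"
    unfolding mvmult_def using kstar_sub[OF y] assms(2) by (subst ssum_le_iff) auto
  have "kstar n B i i * y i \<le> mvmult n (kstar n B) y i"
    unfolding mvmult_def using assms(2) by (intro ssum_upper[where f="\<lambda>k. kstar n B i k * y k"]) auto
  moreover have "y i \<le> kstar n B i i * y i" using kstar_diag[OF assms(2), of B] mult_mono_r by fastforce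
  ultimately show "y i \<le> mvmult n (kstar n B) y i" by simp
qed

lemma kstar_ge:
  fixes B :: "nat \<Rightarrow> nat \<Rightarrow> 'a::idem_semifield"
  assumes "i < n"
  shows "v i \<le> mvmult n (kstar n B) v i"
proof -
  have "kstar n B i i * v i \<le> mvmult n (kstar n B) v i"
    unfolding mvmult_def using assms by (intro ssum_upper[where f="\<lambda>k. kstar n B i k * v k"]) auto
  moreover have "v i \<le> kstar n B i i * v i" using kstar_diag[OF assms, of B] mult_mono_r by fastforce
  ultimately show ?thesis by simp
qed

lemma kstar_image_sub:
  fixes B :: "nat \<Rightarrow> nat \<Rightarrow> 'a::idem_semifield"
  assumes tr: "Tr n B \<le> 1" and "i < n" "k < n"
  shows "B i k * mvmult n (kstar n B) v k \<le> mvmult n (kstar n B) v i"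
proof -
  have "B i k * mvmult n (kstar n B) v k = ssum (\<lambda>l. B i k * (kstar n B k l * v l)) {..<n}"
    unfolding mvmult_def by (simp add: ssum_mult)
  also have "\<dots> \<le> mvmult n (kstar n B) v i"
  unfolding ssum_le_iff[OF finite_lessThan]
  proof (intro ballI)
    fix l assume l: "l \<in> {..<n}"
    hence l: "l < n" by simp
    have "B i k * (kstar n B k l * v l) = (B i k * kstar n B k l) * v l" by (simp add: mult.assoc)
    also have "\<dots> \<le> kstar n B i l * v l" using kstar_closed[OF tr assms(2,3) l] by (rule mult_mono_r)
    also have "\<dots> \<le> mvmult n (kstar n B) v i"
      unfolding mvmult_def using l by (intro ssum_upper[where f="\<lambda>k. kstar n B i k * v k"]) auto
    finally show "B i k * (kstar n B k l * v l) \<le> mvmult n (kstar n B) v i" .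
  qed
  finally show ?thesis .
qed

lemma ge_div_iff: "(c::'a::idem_semifield) \<noteq> 0 \<Longrightarrow> b \<le> c * a \<longleftrightarrow> inverse c * b \<le> a"
  using mult_cancel_le[of c "inverse c * b" a] by (simp add: mult.assoc[symmetric] sf_right_inverse)

lemma dev_le:
  fixes P :: "nat \<Rightarrow> nat \<Rightarrow> 'a::idem_semifield"
  assumes P: "\<forall>i<n. P i j \<noteq> 0" and x: "regular n x" and K: "K \<noteq> 0"
  shows "dev n P j x \<le> K \<longleftrightarrow> (\<forall>i<n. inverse K * P i j \<le> x i \<and> x i \<le> K * P i j)"
proof -
  have "dev n P j x \<le> K \<longleftrightarrow> (\<forall>i<n. inverse (P i j) * x i \<le> K) \<and> (\<forall>i<n. inverse (x i) * P i j \<le> K)"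
    unfolding dev_def dotp_def using P x by (simp add: ssum_le_iff vconj_def regular_def) blast
  also have "\<dots> \<longleftrightarrow> (\<forall>i<n. inverse K * P i j \<le> x i \<and> x i \<le> K * P i j)"
  proof -
    have "inverse (P i j) * x i \<le> K \<longleftrightarrow> x i \<le> K * P i j" if "i < n" for i
      using le_div_iff[OF inv_nz, of "P i j" "x i" K] P that by (simp add: mult.commute)
    moreover have "inverse (x i) * P i j \<le> K \<longleftrightarrow> inverse K * P i j \<le> x i" if "i < n" for i
    proof -
      have "inverse (x i) * P i j \<le> K \<longleftrightarrow> P i j \<le> x i * K"
        using le_div_iff[OF inv_nz, of "x i" "P i j" K] x that by (simp add: regular_def)
      also have "\<dots> \<longleftrightarrow> inverse K * P i j \<le> x i"
        using ge_div_iff[OF K, of "P i j" "x i"] by (simp add: mult.commute)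
      finally show ?thesis .
    qed
    ultimately show ?thesis by auto
  qed
  finally show ?thesis .
qed

lemma yconv:
  fixes x P K :: "'a::idem_semifield"
  assumes x: "x \<noteq> 0" and P: "P \<noteq> 0" and K: "K \<noteq> 0" and c: "c \<noteq> 0"
  shows "(inverse K * P \<le> x \<and> x \<le> K * P) \<longleftrightarrow>
    (rpw K (-\<bar>c\<bar>) * rpw P c \<le> rpw x c \<and> rpw K (-\<bar>c\<bar>) * rpw P (-c) * rpw x c \<le> 1)"
proof -
  have nz: "rpw K (-\<bar>c\<bar>) * rpw P (-c) \<noteq> 0" using rpw_nz K P mult_nz by blast
  have up: "rpw K (-\<bar>c\<bar>) * rpw P (-c) * rpw x c \<le> 1 \<longleftrightarrow> rpw x c \<le> rpw K \<bar>c\<bar> * rpw P c"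
  proof -
    have "rpw K (-\<bar>c\<bar>) * rpw P (-c) = inverse (rpw K \<bar>c\<bar> * rpw P c)"
      using K P by (simp add: inv_mult rpw_nz rpw_neg)
    hence "inverse (rpw K (-\<bar>c\<bar>) * rpw P (-c)) = rpw K \<bar>c\<bar> * rpw P c"
      using K P by (simp add: mult_nz rpw_nz)
    thus ?thesis using le_inv_iff[OF nz, of "rpw x c"] by simp
  qed
  have e1: "rpw (inverse K * P) c = rpw K (-c) * rpw P c"
    using K P by (simp add: rpw_mult_base inv_nz rpw_inv rpw_neg)
  have e2: "rpw (K * P) c = rpw K c * rpw P c"
    using K P by (simp add: rpw_mult_base)
  show ?thesis
  proof (cases "c > 0")
    case True
    then show ?thesis unfolding up using rpw_le_iff[OF True, of "inverse K * P" x] rpw_le_iff[OF True, of x "K * P"]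
      by (simp add: e1 e2)
  next
    case False
    hence cn: "c < 0" using c by simp
    have "inverse K * P \<le> x \<longleftrightarrow> rpw x c \<le> rpw (inverse K * P) c"
      using rpw_le_iff_neg[OF cn x, of "inverse K * P"] K P by (simp add: mult_nz inv_nz)
    moreover have "x \<le> K * P \<longleftrightarrow> rpw (K * P) c \<le> rpw x c"
      using rpw_le_iff_neg[OF cn, of "K * P" x] K P x by (simp add: mult_nz)
    ultimately show ?thesis unfolding up using cn by (auto simp: e1 e2)
  qed
qed

lemma fg_conv:
  fixes x f g :: "'a::idem_semifield"
  assumes x: "x \<noteq> 0" and f: "f \<noteq> 0" and g: "g \<noteq> 0" and fg: "f \<le> g" and c: "c \<noteq> 0"
  shows "(f \<le> x \<and> x \<le> g) \<longleftrightarrow>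
    (inverse (max (rpw f (-c)) (rpw g (-c))) \<le> rpw x c \<and> inverse (max (rpw f c) (rpw g c)) * rpw x c \<le> 1)"
proof (cases "c > 0")
  case True
  have "rpw g (-c) \<le> rpw f (-c)" using rpw_le_iff_neg[of "-c" g f] True f g fg by simp
  hence m1: "max (rpw f (-c)) (rpw g (-c)) = rpw f (-c)" by simp
  have "rpw f c \<le> rpw g c" using rpw_mono[OF True fg] .
  hence m2: "max (rpw f c) (rpw g c) = rpw g c" by simp
  have "inverse (rpw g c) * rpw x c \<le> 1 \<longleftrightarrow> rpw x c \<le> rpw g c"
    using le_inv_iff[of "inverse (rpw g c)" "rpw x c"] rpw_nz[OF g, of c] by (simp add: inv_nz)
  then show ?thesis unfolding m1 m2 using True f
    by (simp add: rpw_neg rpw_nz rpw_le_iff)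
next
  case False
  hence cn: "c < 0" using c by simp
  have "rpw f (-c) \<le> rpw g (-c)" using rpw_mono[of "-c", OF _ fg] cn by simp
  hence m1: "max (rpw f (-c)) (rpw g (-c)) = rpw g (-c)" by simp
  have "rpw g c \<le> rpw f c" using rpw_le_iff_neg[of c g f] cn f g fg by simp
  hence m2: "max (rpw f c) (rpw g c) = rpw f c" by simp
  have "inverse (rpw f c) * rpw x c \<le> 1 \<longleftrightarrow> rpw x c \<le> rpw f c"
    using le_inv_iff[of "inverse (rpw f c)" "rpw x c"] rpw_nz[OF f, of c] by (simp add: inv_nz)
  moreover have "rpw x c \<le> rpw f c \<longleftrightarrow> f \<le> x" using rpw_le_iff_neg[OF cn x f] .
  moreover have "rpw g c \<le> rpw x c \<longleftrightarrow> x \<le> g" using rpw_le_iff_neg[OF cn g x] .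
  ultimately show ?thesis unfolding m1 m2 using g by (auto simp: rpw_neg rpw_nz)
qed

lemma obj_term:
  fixes P :: "nat \<Rightarrow> nat \<Rightarrow> 'a::idem_semifield"
  assumes h: "h \<noteq> 0" and th: "\<theta> \<noteq> 0" and w: "w > 0" and P: "\<forall>i<n. P i j \<noteq> 0"
    and x: "regular n x" and c: "\<forall>i<n. c i \<noteq> 0"
  shows "h * rpw (dev n P j x) w \<le> \<theta> \<longleftrightarrow>
    (\<forall>i<n. rpw \<theta> (-\<bar>c i\<bar>/w) * rpw h (\<bar>c i\<bar>/w) * rpw (P i j) (c i) \<le> rpw (x i) (c i) \<and>
           rpw \<theta> (-\<bar>c i\<bar>/w) * rpw h (\<bar>c i\<bar>/w) * rpw (P i j) (- c i) * rpw (x i) (c i) \<le> 1)"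
  (is "_ \<longleftrightarrow> ?R")
proof -
  define K where "K = rpw (inverse h * \<theta>) (1/w)"
  have z: "inverse h * \<theta> \<noteq> 0" using h th by (simp add: mult_nz inv_nz)
  have K: "K \<noteq> 0" unfolding K_def using z by (simp add: rpw_nz)
  have Kw: "rpw K w = inverse h * \<theta>" unfolding K_def using z w by (simp add: rpw_rpw rpw_one)
  have "h * rpw (dev n P j x) w \<le> \<theta> \<longleftrightarrow> rpw (dev n P j x) w \<le> rpw K w"
    unfolding Kw using le_div_iff[OF h] .
  also have "\<dots> \<longleftrightarrow> dev n P j x \<le> K" using rpw_le_iff[OF w] .
  also have "\<dots> \<longleftrightarrow> (\<forall>i<n. inverse K * P i j \<le> x i \<and> x i \<le> K * P i j)" using dev_le[of n P j x K] P x K by blast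
  also have "\<dots> \<longleftrightarrow> (\<forall>i<n. rpw K (-\<bar>c i\<bar>) * rpw (P i j) (c i) \<le> rpw (x i) (c i) \<and>
       rpw K (-\<bar>c i\<bar>) * rpw (P i j) (- c i) * rpw (x i) (c i) \<le> 1)"
  proof -
    have "(inverse K * P i j \<le> x i \<and> x i \<le> K * P i j) \<longleftrightarrow> (rpw K (-\<bar>c i\<bar>) * rpw (P i j) (c i) \<le> rpw (x i) (c i) \<and>
       rpw K (-\<bar>c i\<bar>) * rpw (P i j) (- c i) * rpw (x i) (c i) \<le> 1)" if "i < n" for i
      using yconv[of "x i" "P i j" K "c i"] K x P c that by (simp add: regular_def)
    thus ?thesis by auto
  qed
  also have "\<dots> \<longleftrightarrow> ?R"
  proof -
    have "rpw K (-\<bar>c i\<bar>) = rpw \<theta> (-\<bar>c i\<bar>/w) * rpw h (\<bar>c i\<bar>/w)" for i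
    proof -
      have "rpw K (-\<bar>c i\<bar>) = rpw (inverse h * \<theta>) (1/w * -\<bar>c i\<bar>)" unfolding K_def using z by (simp add: rpw_rpw)
      also have "\<dots> = rpw (inverse h) (-\<bar>c i\<bar>/w) * rpw \<theta> (-\<bar>c i\<bar>/w)"
        using h th by (simp add: rpw_mult_base inv_nz)
      also have "\<dots> = rpw \<theta> (-\<bar>c i\<bar>/w) * rpw h (\<bar>c i\<bar>/w)"
        using h by (simp add: rpw_inv rpw_neg[symmetric] mult.commute)
      finally show ?thesis .
    qed
    thus ?thesis by simp
  qed
  finally show ?thesis .
qed

lemma le_iff_inv_mult: "(Y::'a::idem_semifield) \<noteq> 0 \<Longrightarrow> X \<le> Y \<longleftrightarrow> inverse Y * X \<le> 1"
  using le_div_iff[OF inv_nz, of Y X 1] by simp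

lemma term_gen:
  fixes h \<theta> Y :: "'a::idem_semifield"
  assumes h: "h \<noteq> 0" and th: "\<theta> \<noteq> 0" and w: "w > 0" and c: "c \<noteq> 0"
  shows "h * rpw Y (w/\<bar>c\<bar>) \<le> \<theta> \<longleftrightarrow> rpw \<theta> (-\<bar>c\<bar>/w) * rpw h (\<bar>c\<bar>/w) * Y \<le> 1"
proof -
  have e: "w/\<bar>c\<bar> > 0" using w c by simp
  define Z where "Z = inverse h * \<theta>"
  have Z: "Z \<noteq> 0" unfolding Z_def using h th by (simp add: mult_nz inv_nz)
  have "h * rpw Y (w/\<bar>c\<bar>) \<le> \<theta> \<longleftrightarrow> rpw Y (w/\<bar>c\<bar>) \<le> Z" unfolding Z_def using le_div_iff[OF h] .
  also have "Z = rpw (rpw Z (\<bar>c\<bar>/w)) (w/\<bar>c\<bar>)" using Z w c by (simp add: rpw_rpw rpw_one)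
  also have "rpw Y (w/\<bar>c\<bar>) \<le> rpw (rpw Z (\<bar>c\<bar>/w)) (w/\<bar>c\<bar>) \<longleftrightarrow> Y \<le> rpw Z (\<bar>c\<bar>/w)"
    using rpw_le_iff[OF e] .
  also have "\<dots> \<longleftrightarrow> inverse (rpw Z (\<bar>c\<bar>/w)) * Y \<le> 1" using le_iff_inv_mult rpw_nz[OF Z] by blast
  also have "inverse (rpw Z (\<bar>c\<bar>/w)) = rpw \<theta> (-\<bar>c\<bar>/w) * rpw h (\<bar>c\<bar>/w)"
  proof -
    have "inverse (rpw Z (\<bar>c\<bar>/w)) = rpw Z (-(\<bar>c\<bar>/w))" using Z by (simp add: rpw_neg)
    also have "\<dots> = rpw (inverse h) (-(\<bar>c\<bar>/w)) * rpw \<theta> (-(\<bar>c\<bar>/w))"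
      unfolding Z_def using h th by (simp add: rpw_mult_base inv_nz)
    also have "\<dots> = rpw \<theta> (-\<bar>c\<bar>/w) * rpw h (\<bar>c\<bar>/w)"
      using h by (simp add: rpw_inv rpw_neg[symmetric] mult.commute)
    finally show ?thesis .
  qed
  finally show ?thesis .
qed

lemma term1:
  fixes hj hl \<theta> Pij Pkl Kik :: "'a::idem_semifield"
  assumes hj: "hj \<noteq> 0" and hl: "hl \<noteq> 0" and th: "\<theta> \<noteq> 0" and wj: "wj > 0" and wl: "wl > 0"
    and ci: "ci \<noteq> 0" and ck: "ck \<noteq> 0" and Pij: "Pij \<noteq> 0" and Pkl: "Pkl \<noteq> 0"
  shows "rpw hj (\<bar>ci\<bar> * wl / (\<bar>ci\<bar> * wl + \<bar>ck\<bar> * wj))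
              * rpw hl (\<bar>ck\<bar> * wj / (\<bar>ci\<bar> * wl + \<bar>ck\<bar> * wj))
              * rpw (rpw Pij (- ci) * Kik * rpw Pkl ck) (wj * wl / (\<bar>ci\<bar> * wl + \<bar>ck\<bar> * wj)) \<le> \<theta>
     \<longleftrightarrow> rpw \<theta> (-\<bar>ci\<bar>/wj) * rpw hj (\<bar>ci\<bar>/wj) * rpw Pij (- ci) * Kik
           * (rpw \<theta> (-\<bar>ck\<bar>/wl) * rpw hl (\<bar>ck\<bar>/wl) * rpw Pkl ck) \<le> 1"
proof -
  define D where "D = \<bar>ci\<bar> * wl + \<bar>ck\<bar> * wj"
  have D: "D > 0" unfolding D_def using ci ck wj wl by (simp add: add_pos_pos)
  define e where "e = wj * wl / D"
  have e: "e > 0" "1/e > 0" unfolding e_def using D wj wl by auto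
  define Z where "Z = rpw Pij (- ci) * Kik * rpw Pkl ck"
  define a where "a = \<bar>ci\<bar> * wl / D"
  define b where "b = \<bar>ck\<bar> * wj / D"
  have ae: "a / e = \<bar>ci\<bar>/wj" unfolding a_def e_def using D wj wl by (simp add: field_simps)
  have be: "b / e = \<bar>ck\<bar>/wl" unfolding b_def e_def using D wj wl by (simp add: field_simps)
  have ee: "e * (1/e) = 1" using e by simp
  have ie: "1/e = \<bar>ci\<bar>/wj + \<bar>ck\<bar>/wl" unfolding e_def D_def using wj wl by (simp add: field_simps)
  have "rpw hj a * rpw hl b * rpw Z e \<le> \<theta> \<longleftrightarrow>
        rpw (rpw hj a * rpw hl b * rpw Z e) (1/e) \<le> rpw \<theta> (1/e)"
    using rpw_le_iff[OF e(2)] by blast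
  also have "rpw (rpw hj a * rpw hl b * rpw Z e) (1/e) = rpw hj (\<bar>ci\<bar>/wj) * rpw hl (\<bar>ck\<bar>/wl) * Z"
    using e hj hl by (simp add: rpw_mult rpw_rpw rpw_rpw' ae be ee rpw_one)
  also have "rpw \<theta> (1/e) = rpw \<theta> (\<bar>ci\<bar>/wj) * rpw \<theta> (\<bar>ck\<bar>/wl)"
    unfolding ie using th by (simp add: rpw_add)
  also have "rpw hj (\<bar>ci\<bar>/wj) * rpw hl (\<bar>ck\<bar>/wl) * Z \<le> rpw \<theta> (\<bar>ci\<bar>/wj) * rpw \<theta> (\<bar>ck\<bar>/wl)
      \<longleftrightarrow> inverse (rpw \<theta> (\<bar>ci\<bar>/wj) * rpw \<theta> (\<bar>ck\<bar>/wl)) * (rpw hj (\<bar>ci\<bar>/wj) * rpw hl (\<bar>ck\<bar>/wl) * Z) \<le> 1"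
    using le_iff_inv_mult mult_nz rpw_nz th by metis
  also have "inverse (rpw \<theta> (\<bar>ci\<bar>/wj) * rpw \<theta> (\<bar>ck\<bar>/wl)) = rpw \<theta> (-\<bar>ci\<bar>/wj) * rpw \<theta> (-\<bar>ck\<bar>/wl)"
    using th by (simp add: inv_mult rpw_nz rpw_neg[symmetric])
  finally show ?thesis unfolding Z_def a_def b_def e_def D_def by (simp add: ac_simps)
qed

lemma term2:
  fixes hj \<theta> Pij Kik sk :: "'a::idem_semifield"
  assumes "hj \<noteq> 0" "\<theta> \<noteq> 0" "wj > 0" "ci \<noteq> 0"
  shows "hj * rpw (rpw Pij (- ci) * Kik * sk) (wj / \<bar>ci\<bar>) \<le> \<theta>
     \<longleftrightarrow> rpw \<theta> (-\<bar>ci\<bar>/wj) * rpw hj (\<bar>ci\<bar>/wj) * rpw Pij (- ci) * Kik * sk \<le> 1"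
  using term_gen[OF assms, of "rpw Pij (- ci) * Kik * sk"] by (simp add: ac_simps)

lemma term3:
  fixes hl \<theta> Pkl Kik ti :: "'a::idem_semifield"
  assumes "hl \<noteq> 0" "\<theta> \<noteq> 0" "wl > 0" "ck \<noteq> 0"
  shows "hl * rpw (ti * Kik * rpw Pkl ck) (wl / \<bar>ck\<bar>) \<le> \<theta>
     \<longleftrightarrow> ti * Kik * (rpw \<theta> (-\<bar>ck\<bar>/wl) * rpw hl (\<bar>ck\<bar>/wl) * rpw Pkl ck) \<le> 1"
  using term_gen[OF assms, of "ti * Kik * rpw Pkl ck"] by (simp add: ac_simps)

lemma max_nz1: "(a::'a::idem_semifield) \<noteq> 0 \<Longrightarrow> max a b \<noteq> 0"
  by (metis le_zero_iff max.cobounded1)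

lemma max_nz2: "(b::'a::idem_semifield) \<noteq> 0 \<Longrightarrow> max a b \<noteq> 0"
  by (metis le_zero_iff max.cobounded2)

lemma nz_lower: "(a::'a::idem_semifield) \<le> b \<Longrightarrow> a \<noteq> 0 \<Longrightarrow> b \<noteq> 0"
  by (metis le_zero_iff order_trans)

lemma combo_le:
  fixes a b Kik yi yk :: "'a::idem_semifield"
  assumes "a * yi \<le> 1" "b \<le> yk" "Kik * yk \<le> yi"
  shows "a * Kik * b \<le> 1"
proof -
  have "a * Kik * b \<le> a * (Kik * yk)" using assms(2) by (simp add: mult.assoc mult_mono_l)
  also have "\<dots> \<le> a * yi" using assms(3) by (rule mult_mono_l)
  finally show ?thesis using assms(1) by simp
qed

lemma ssum2_le:
  "finite A \<Longrightarrow> finite C \<Longrightarrow>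
   ssum f A * z * ssum g C \<le> (u::'a::idem_semifield) \<longleftrightarrow> (\<forall>a\<in>A. \<forall>b\<in>C. f a * z * g b \<le> u)"
  by (simp add: ssum_mult ssum_mult_r ssum_le_iff) blast

lemma ssum1_le:
  "finite A \<Longrightarrow> ssum f A * (z::'a::idem_semifield) \<le> u \<longleftrightarrow> (\<forall>a\<in>A. f a * z \<le> u)"
  by (simp add: ssum_mult_r ssum_le_iff)

lemma ssum1r_le:
  "finite A \<Longrightarrow> (z::'a::idem_semifield) * ssum f A \<le> u \<longleftrightarrow> (\<forall>a\<in>A. z * f a \<le> u)"
  by (simp add: ssum_mult ssum_le_iff)

lemma ssum_cong: "A = C \<Longrightarrow> (\<And>x. x \<in> C \<Longrightarrow> f x = g x) \<Longrightarrow> ssum f A = (ssum g C::'a::idem_semifield)"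
  unfolding ssum_def by (metis image_cong)

theorem theorem3:
  fixes n m :: nat
    and P :: "nat \<Rightarrow> nat \<Rightarrow> 'a::idem_semifield"
    and w :: "nat \<Rightarrow> real" and c :: "nat \<Rightarrow> real"
    and h d f g :: "nat \<Rightarrow> 'a"
    and B :: "nat \<Rightarrow> nat \<Rightarrow> 'a"
    and s t q r :: "nat \<Rightarrow> 'a" and \<theta> :: 'a
  assumes "n \<ge> 1" and "m \<ge> 1"
    and "\<forall>i<n. \<forall>j<m. P i j \<noteq> 0"
    and "\<forall>j<m. w j > 0"
    and "\<forall>j<m. h j \<noteq> 0 \<and> d j \<noteq> 0"
    and "\<forall>i<n. c i \<noteq> 0"
    and "regular n f" and "regular n g" and "\<forall>i<n. f i \<le> g i"
    and s_def: "\<forall>i. s i = max (ssum (\<lambda>j. rpw (d j) (- \<bar>c i\<bar>) * rpw (P i j) (c i)) {..<m})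
                     (inverse (max (rpw (f i) (- c i)) (rpw (g i) (- c i))))"
    and t_def: "\<forall>i. t i = inverse (max (ssum (\<lambda>j. rpw (d j) (- \<bar>c i\<bar>) * rpw (P i j) (- c i)) {..<m})
                     (inverse (max (rpw (f i) (c i)) (rpw (g i) (c i)))))"
    and "Tr n B \<le> 1"
    and "dotp n (vmmult n (vconj t) (kstar n B)) s \<le> 1"
    and theta_def: "\<theta> = ssum (\<lambda>(i, k). ssum (\<lambda>(j, l).
           max (max
             (rpw (h j) (\<bar>c i\<bar> * w l / (\<bar>c i\<bar> * w l + \<bar>c k\<bar> * w j))
              * rpw (h l) (\<bar>c k\<bar> * w j / (\<bar>c i\<bar> * w l + \<bar>c k\<bar> * w j))
              * rpw (rpw (P i j) (- c i) * kstar n B i k * rpw (P k l) (c k))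
                    (w j * w l / (\<bar>c i\<bar> * w l + \<bar>c k\<bar> * w j)))
             (h j * rpw (rpw (P i j) (- c i) * kstar n B i k * s k) (w j / \<bar>c i\<bar>)))
             (h l * rpw (inverse (t i) * kstar n B i k * rpw (P k l) (c k)) (w l / \<bar>c k\<bar>)))
         ({..<m} \<times> {..<m})) ({..<n} \<times> {..<n})"
    and q_def: "\<forall>i. q i = ssum (\<lambda>j. rpw \<theta> (- \<bar>c i\<bar> / w j) * rpw (h j) (\<bar>c i\<bar> / w j)
                     * rpw (P i j) (c i)) {..<m}"
    and r_def: "\<forall>i. r i = inverse (ssum (\<lambda>j. rpw \<theta> (- \<bar>c i\<bar> / w j) * rpw (h j) (\<bar>c i\<bar> / w j)
                     * rpw (P i j) (- c i)) {..<m})"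
  shows "(\<exists>x. feasible n m P d c B f g x \<and> objective n m P w h x = \<theta>)
       \<and> (\<forall>x. feasible n m P d c B f g x \<longrightarrow> \<theta> \<le> objective n m P w h x)
       \<and> (\<forall>x. (feasible n m P d c B f g x \<and> objective n m P w h x = \<theta>) \<longleftrightarrow>
              (\<exists>v. (\<forall>i<n. max (q i) (s i) \<le> v i \<and>
                           v i \<le> vconj (vmmult n (\<lambda>k. max (vconj r k) (vconj t k)) (kstar n B)) i)
                 \<and> (\<forall>i<n. x i = rpw (mvmult n (kstar n B) v i) (1 / c i))))"
proof -
  have Pnz: "\<And>i j. i < n \<Longrightarrow> j < m \<Longrightarrow> P i j \<noteq> 0" using assms(3) by blast
  have wpos: "\<And>j. j < m \<Longrightarrow> w j > 0" using assms(4) by blast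
  have hnz: "\<And>j. j < m \<Longrightarrow> h j \<noteq> 0" using assms(5) by blast
  have dnz: "\<And>j. j < m \<Longrightarrow> d j \<noteq> 0" using assms(5) by blast
  have cnz: "\<And>i. i < n \<Longrightarrow> c i \<noteq> 0" using assms(6) by blast
  have fnz: "\<And>i. i < n \<Longrightarrow> f i \<noteq> 0" using assms(7) by (simp add: regular_def)
  have gnz: "\<And>i. i < n \<Longrightarrow> g i \<noteq> 0" using assms(8) by (simp add: regular_def)
  have fg: "\<And>i. i < n \<Longrightarrow> f i \<le> g i" using assms(9) by blast
  have tr: "Tr n B \<le> 1" using assms(12) .
  have m0: "0 < m" and n0: "0 < n" using assms(1,2) by auto
  define Y where "Y x i = rpw (x i) (c i)" for x :: "nat \<Rightarrow> 'a" and i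
  define Qf where "Qf \<theta>' i = ssum (\<lambda>j. rpw \<theta>' (- \<bar>c i\<bar> / w j) * rpw (h j) (\<bar>c i\<bar> / w j)
                     * rpw (P i j) (c i)) {..<m}" for \<theta>' i
  define Rf where "Rf \<theta>' i = ssum (\<lambda>j. rpw \<theta>' (- \<bar>c i\<bar> / w j) * rpw (h j) (\<bar>c i\<bar> / w j)
                     * rpw (P i j) (- c i)) {..<m}" for \<theta>' i
  define T where "T i = max (ssum (\<lambda>j. rpw (d j) (- \<bar>c i\<bar>) * rpw (P i j) (- c i)) {..<m})
                     (inverse (max (rpw (f i) (c i)) (rpw (g i) (c i))))" for i
  have q_eq: "\<And>i. q i = Qf \<theta> i" using q_def by (simp add: Qf_def)
  have r_eq: "\<And>i. r i = inverse (Rf \<theta> i)" using r_def by (simp add: Rf_def)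
  have t_eq: "\<And>i. t i = inverse (T i)" using t_def by (simp add: T_def)
  have Tnz: "\<And>i. i < n \<Longrightarrow> T i \<noteq> 0"
    unfolding T_def by (intro max_nz2 inv_nz max_nz1 rpw_nz fnz)
  have snz: "\<And>i. i < n \<Longrightarrow> s i \<noteq> 0"
    using s_def by (simp add: max_nz2 inv_nz max_nz1 rpw_nz fnz)
  have Qnz: "\<And>\<theta>' i. \<theta>' \<noteq> 0 \<Longrightarrow> i < n \<Longrightarrow> Qf \<theta>' i \<noteq> 0"
    unfolding Qf_def using m0 by (intro ssum_nz[of _ 0]) (auto simp: mult_nz rpw_nz hnz Pnz)
  have Rnz: "\<And>\<theta>' i. \<theta>' \<noteq> 0 \<Longrightarrow> i < n \<Longrightarrow> Rf \<theta>' i \<noteq> 0"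
    unfolding Rf_def using m0 by (intro ssum_nz[of _ 0]) (auto simp: mult_nz rpw_nz hnz Pnz)
  have Kdiag: "\<And>i. i < n \<Longrightarrow> kstar n B i i \<noteq> 0"
    using kstar_diag nz_lower one_nz by metis
  have feas_iff: "feasible n m P d c B f g x \<longleftrightarrow> regular n x \<and> (\<forall>i<n. \<forall>k<n. B i k * Y x k \<le> Y x i)
      \<and> (\<forall>i<n. s i \<le> Y x i \<and> T i * Y x i \<le> 1)" for x
  proof (cases "regular n x")
    case False then show ?thesis by (simp add: feasible_def)
  next
    case True
    have xnz: "\<And>i. i < n \<Longrightarrow> x i \<noteq> 0" using True by (simp add: regular_def)
    have A: "(\<forall>j<m. dev n P j x \<le> d j) \<longleftrightarrow> (\<forall>j<m. \<forall>i<n. rpw (d j) (-\<bar>c i\<bar>) * rpw (P i j) (c i) \<le> Y x i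
         \<and> rpw (d j) (-\<bar>c i\<bar>) * rpw (P i j) (- c i) * Y x i \<le> 1)"
    proof -
      have "dev n P j x \<le> d j \<longleftrightarrow> (\<forall>i<n. rpw (d j) (-\<bar>c i\<bar>) * rpw (P i j) (c i) \<le> Y x i
         \<and> rpw (d j) (-\<bar>c i\<bar>) * rpw (P i j) (- c i) * Y x i \<le> 1)" if j: "j < m" for j
      proof -
        have "dev n P j x \<le> d j \<longleftrightarrow> (\<forall>i<n. inverse (d j) * P i j \<le> x i \<and> x i \<le> d j * P i j)"
          by (rule dev_le) (use Pnz j True dnz in auto)
        also have "\<dots> \<longleftrightarrow> (\<forall>i<n. rpw (d j) (-\<bar>c i\<bar>) * rpw (P i j) (c i) \<le> Y x i
         \<and> rpw (d j) (-\<bar>c i\<bar>) * rpw (P i j) (- c i) * Y x i \<le> 1)"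
        proof -
          have "(inverse (d j) * P i j \<le> x i \<and> x i \<le> d j * P i j) \<longleftrightarrow> (rpw (d j) (-\<bar>c i\<bar>) * rpw (P i j) (c i) \<le> Y x i
              \<and> rpw (d j) (-\<bar>c i\<bar>) * rpw (P i j) (- c i) * Y x i \<le> 1)" if i: "i < n" for i
            unfolding Y_def by (rule yconv[OF xnz[OF i] Pnz[OF i j] dnz[OF j] cnz[OF i]])
          thus ?thesis by auto
        qed
        finally show ?thesis .
      qed
      thus ?thesis by auto
    qed
    have Bfg: "(\<forall>i<n. f i \<le> x i \<and> x i \<le> g i) \<longleftrightarrow> (\<forall>i<n. inverse (max (rpw (f i) (- c i)) (rpw (g i) (- c i))) \<le> Y x i
        \<and> inverse (max (rpw (f i) (c i)) (rpw (g i) (c i))) * Y x i \<le> 1)"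
    proof -
      have "(f i \<le> x i \<and> x i \<le> g i) \<longleftrightarrow> (inverse (max (rpw (f i) (- c i)) (rpw (g i) (- c i))) \<le> Y x i
        \<and> inverse (max (rpw (f i) (c i)) (rpw (g i) (c i))) * Y x i \<le> 1)" if i: "i < n" for i
        unfolding Y_def by (rule fg_conv[OF xnz[OF i] fnz[OF i] gnz[OF i] fg[OF i] cnz[OF i]])
      thus ?thesis by auto
    qed
    have S: "s i \<le> Y x i \<longleftrightarrow> (\<forall>j<m. rpw (d j) (-\<bar>c i\<bar>) * rpw (P i j) (c i) \<le> Y x i)
        \<and> inverse (max (rpw (f i) (- c i)) (rpw (g i) (- c i))) \<le> Y x i" for i
      using s_def by (simp add: ssum_le_iff Ball_def)
    have Tc: "T i * Y x i \<le> 1 \<longleftrightarrow> (\<forall>j<m. rpw (d j) (-\<bar>c i\<bar>) * rpw (P i j) (- c i) * Y x i \<le> 1)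
        \<and> inverse (max (rpw (f i) (c i)) (rpw (g i) (c i))) * Y x i \<le> 1" for i
      unfolding T_def max_mult_r by (simp add: ssum1_le Ball_def)
    have "feasible n m P d c B f g x \<longleftrightarrow> 
       (\<forall>j<m. dev n P j x \<le> d j) \<and> (\<forall>i<n. \<forall>k<n. B i k * Y x k \<le> Y x i) \<and> (\<forall>i<n. f i \<le> x i \<and> x i \<le> g i)"
      unfolding feasible_def Y_def by (simp add: True)
    also have "\<dots> \<longleftrightarrow> (\<forall>i<n. \<forall>k<n. B i k * Y x k \<le> Y x i) \<and> (\<forall>i<n. s i \<le> Y x i \<and> T i * Y x i \<le> 1)"
      unfolding A Bfg S Tc by blast
    finally show ?thesis using True by blast
  qed
  have obj_iff: "objective n m P w h x \<le> \<theta>' \<longleftrightarrow> (\<forall>i<n. Qf \<theta>' i \<le> Y x i \<and> Rf \<theta>' i * Y x i \<le> 1)"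
    if xr: "regular n x" and th: "\<theta>' \<noteq> 0" for x \<theta>'
  proof -
    have "objective n m P w h x \<le> \<theta>' \<longleftrightarrow> (\<forall>j<m. h j * rpw (dev n P j x) (w j) \<le> \<theta>')"
      unfolding objective_def by (simp add: ssum_le_iff Ball_def)
    also have "\<dots> \<longleftrightarrow> (\<forall>j<m. \<forall>i<n. rpw \<theta>' (-\<bar>c i\<bar>/w j) * rpw (h j) (\<bar>c i\<bar>/w j) * rpw (P i j) (c i) \<le> Y x i \<and>
           rpw \<theta>' (-\<bar>c i\<bar>/w j) * rpw (h j) (\<bar>c i\<bar>/w j) * rpw (P i j) (- c i) * Y x i \<le> 1)"
    proof -
      have "h j * rpw (dev n P j x) (w j) \<le> \<theta>' \<longleftrightarrow> (\<forall>i<n. rpw \<theta>' (-\<bar>c i\<bar>/w j) * rpw (h j) (\<bar>c i\<bar>/w j) * rpw (P i j) (c i) \<le> Y x i \<and>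
           rpw \<theta>' (-\<bar>c i\<bar>/w j) * rpw (h j) (\<bar>c i\<bar>/w j) * rpw (P i j) (- c i) * Y x i \<le> 1)" if j: "j < m" for j
        unfolding Y_def by (rule obj_term[OF hnz[OF j] th wpos[OF j] _ xr]) (use Pnz j cnz in auto)
      thus ?thesis by auto
    qed
    also have "\<dots> \<longleftrightarrow> (\<forall>i<n. Qf \<theta>' i \<le> Y x i \<and> Rf \<theta>' i * Y x i \<le> 1)"
      unfolding Qf_def Rf_def by (simp add: ssum_le_iff ssum1_le Ball_def) blast
    finally show ?thesis .
  qed
  have obj_nz: "objective n m P w h x \<noteq> 0" if xr: "regular n x" for x
  proof -
    have P00: "P 0 0 \<noteq> 0" using Pnz[OF n0 m0] .
    have v: "vconj (\<lambda>i. P i 0) 0 = inverse (P 0 0)" by (simp add: vconj_def P00)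
    have x0: "x 0 \<noteq> 0" using xr n0 by (simp add: regular_def)
    have "vconj (\<lambda>i. P i 0) 0 * x 0 \<le> dotp n (vconj (\<lambda>i. P i 0)) x"
      unfolding dotp_def by (rule ssum_upper[where f="\<lambda>i. vconj (\<lambda>i. P i 0) i * x i"]) (use n0 in auto)
    also have "\<dots> \<le> dev n P 0 x" unfolding dev_def by (rule max.cobounded1)
    finally have lb: "inverse (P 0 0) * x 0 \<le> dev n P 0 x" unfolding v .
    have "inverse (P 0 0) * x 0 \<noteq> 0" by (rule mult_nz[OF inv_nz[OF P00] x0])
    hence "dev n P 0 x \<noteq> 0" using lb nz_lower by blast
    hence "h 0 * rpw (dev n P 0 x) (w 0) \<noteq> 0" by (intro mult_nz hnz[OF m0] rpw_nz)
    moreover have "0 \<in> {..<m}" using m0 by simp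
    ultimately show ?thesis unfolding objective_def
      using ssum_nz[OF finite_lessThan, of 0 m "\<lambda>j. h j * rpw (dev n P j x) (w j)"] by simp
  qed
  define t1 where "t1 i k j l = rpw (h j) (\<bar>c i\<bar> * w l / (\<bar>c i\<bar> * w l + \<bar>c k\<bar> * w j))
              * rpw (h l) (\<bar>c k\<bar> * w j / (\<bar>c i\<bar> * w l + \<bar>c k\<bar> * w j))
              * rpw (rpw (P i j) (- c i) * kstar n B i k * rpw (P k l) (c k))
                    (w j * w l / (\<bar>c i\<bar> * w l + \<bar>c k\<bar> * w j))" for i k j l
  define t2 where "t2 i k j = h j * rpw (rpw (P i j) (- c i) * kstar n B i k * s k) (w j / \<bar>c i\<bar>)" for i k j
  define t3 where "t3 i k l = h l * rpw (inverse (t i) * kstar n B i k * rpw (P k l) (c k)) (w l / \<bar>c k\<bar>)" for i k l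
  have theta_eq: "\<theta> = ssum (\<lambda>(i, k). ssum (\<lambda>(j, l). max (max (t1 i k j l) (t2 i k j)) (t3 i k l))
         ({..<m} \<times> {..<m})) ({..<n} \<times> {..<n})"
    unfolding theta_def t1_def t2_def t3_def by simp
  have theta_iff: "\<theta> \<le> \<theta>' \<longleftrightarrow> (\<forall>i<n. \<forall>k<n. Rf \<theta>' i * kstar n B i k * Qf \<theta>' k \<le> 1
      \<and> Rf \<theta>' i * kstar n B i k * s k \<le> 1 \<and> T i * kstar n B i k * Qf \<theta>' k \<le> 1)" if th: "\<theta>' \<noteq> 0" for \<theta>'
  proof -
    have step1: "\<theta> \<le> \<theta>' \<longleftrightarrow> (\<forall>i<n. \<forall>k<n. \<forall>j<m. \<forall>l<m. t1 i k j l \<le> \<theta>' \<and> t2 i k j \<le> \<theta>' \<and> t3 i k l \<le> \<theta>')"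
      unfolding theta_eq by (auto simp: ssum_le_iff)
    have c1: "t1 i k j l \<le> \<theta>' \<longleftrightarrow> rpw \<theta>' (-\<bar>c i\<bar>/w j) * rpw (h j) (\<bar>c i\<bar>/w j) * rpw (P i j) (- c i) * kstar n B i k
           * (rpw \<theta>' (-\<bar>c k\<bar>/w l) * rpw (h l) (\<bar>c k\<bar>/w l) * rpw (P k l) (c k)) \<le> 1"
      if i: "i < n" and k: "k < n" and j: "j < m" and l: "l < m" for i k j l
      unfolding t1_def by (rule term1[OF hnz[OF j] hnz[OF l] th wpos[OF j] wpos[OF l] cnz[OF i] cnz[OF k] Pnz[OF i j] Pnz[OF k l]])
    have c2: "t2 i k j \<le> \<theta>' \<longleftrightarrow> rpw \<theta>' (-\<bar>c i\<bar>/w j) * rpw (h j) (\<bar>c i\<bar>/w j) * rpw (P i j) (- c i) * kstar n B i k * s k \<le> 1"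
      if i: "i < n" and j: "j < m" for i k j
      unfolding t2_def by (rule term2[OF hnz[OF j] th wpos[OF j] cnz[OF i]])
    have c3: "t3 i k l \<le> \<theta>' \<longleftrightarrow> T i * kstar n B i k * (rpw \<theta>' (-\<bar>c k\<bar>/w l) * rpw (h l) (\<bar>c k\<bar>/w l) * rpw (P k l) (c k)) \<le> 1"
      if i: "i < n" and k: "k < n" and l: "l < m" for i k l
    proof -
      have "inverse (t i) = T i" using t_eq Tnz[OF i] by simp
      thus ?thesis unfolding t3_def using term3[OF hnz[OF l] th wpos[OF l] cnz[OF k], of "inverse (t i)" "kstar n B i k" "P k l"] by simp
    qed
    have d1: "Rf \<theta>' i * kstar n B i k * Qf \<theta>' k \<le> 1 \<longleftrightarrow> (\<forall>j<m. \<forall>l<m. rpw \<theta>' (-\<bar>c i\<bar>/w j) * rpw (h j) (\<bar>c i\<bar>/w j) * rpw (P i j) (- c i) * kstar n B i k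
           * (rpw \<theta>' (-\<bar>c k\<bar>/w l) * rpw (h l) (\<bar>c k\<bar>/w l) * rpw (P k l) (c k)) \<le> 1)" for i k
      unfolding Rf_def Qf_def by (simp add: ssum2_le Ball_def)
    have d2: "Rf \<theta>' i * kstar n B i k * s k \<le> 1 \<longleftrightarrow> (\<forall>j<m. rpw \<theta>' (-\<bar>c i\<bar>/w j) * rpw (h j) (\<bar>c i\<bar>/w j) * rpw (P i j) (- c i) * kstar n B i k * s k \<le> 1)" for i k
      unfolding Rf_def by (simp add: ssum1_le Ball_def mult.assoc)
    have d3: "T i * kstar n B i k * Qf \<theta>' k \<le> 1 \<longleftrightarrow> (\<forall>l<m. T i * kstar n B i k * (rpw \<theta>' (-\<bar>c k\<bar>/w l) * rpw (h l) (\<bar>c k\<bar>/w l) * rpw (P k l) (c k)) \<le> 1)" for i k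
      unfolding Qf_def by (simp add: ssum1r_le Ball_def)
    show ?thesis unfolding step1 d1 d2 d3 using c1 c2 c3 m0 by (auto 0 0)
  qed
  have Ksub: "kstar n B i k * Y x k \<le> Y x i" if "feasible n m P d c B f g x" "i < n" "k < n" for x i k
    using kstar_sub[of n B "Y x" i k] that feas_iff by blast
  have min: "\<theta> \<le> objective n m P w h x" if fx: "feasible n m P d c B f g x" for x
  proof -
    define \<theta>' where "\<theta>' = objective n m P w h x"
    have xr: "regular n x" using fx feas_iff by blast
    have th: "\<theta>' \<noteq> 0" unfolding \<theta>'_def using obj_nz[OF xr] .
    have ob: "\<forall>i<n. Qf \<theta>' i \<le> Y x i \<and> Rf \<theta>' i * Y x i \<le> 1"
      using obj_iff[OF xr th] unfolding \<theta>'_def by simp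
    have fe: "\<forall>i<n. s i \<le> Y x i \<and> T i * Y x i \<le> 1" using fx feas_iff by blast
    have "\<forall>i<n. \<forall>k<n. Rf \<theta>' i * kstar n B i k * Qf \<theta>' k \<le> 1
      \<and> Rf \<theta>' i * kstar n B i k * s k \<le> 1 \<and> T i * kstar n B i k * Qf \<theta>' k \<le> 1"
    proof (intro allI impI conjI)
      fix i k assume i: "i < n" and k: "k < n"
      have K: "kstar n B i k * Y x k \<le> Y x i" using Ksub[OF fx i k] .
      show "Rf \<theta>' i * kstar n B i k * Qf \<theta>' k \<le> 1" using ob i k K by (intro combo_le) auto
      show "Rf \<theta>' i * kstar n B i k * s k \<le> 1" using ob fe i k K by (intro combo_le) auto
      show "T i * kstar n B i k * Qf \<theta>' k \<le> 1" using ob fe i k K by (intro combo_le) auto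
    qed
    thus ?thesis using theta_iff[OF th] unfolding \<theta>'_def by blast
  qed
  have thnz: "\<theta> \<noteq> 0"
  proof -
    have all: "\<forall>i<n. \<forall>k<n. \<forall>j<m. \<forall>l<m. t1 i k j l \<le> z" if "\<theta> \<le> z" for z
      using that unfolding theta_eq by (auto simp: ssum_le_iff)
    have "t1 0 0 0 0 \<le> \<theta>" using all[OF order_refl] n0 m0 by blast
    moreover have "t1 0 0 0 0 \<noteq> 0" unfolding t1_def
      using hnz[OF m0] Pnz[OF n0 m0] Kdiag[OF n0] wpos[OF m0] cnz[OF n0]
      by (intro mult_nz rpw_nz) (auto simp: rpw_eq0_iff)
    ultimately show ?thesis using nz_lower by blast
  qed
  define row where "row = vmmult n (\<lambda>k. max (vconj r k) (vconj t k)) (kstar n B)"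
  have zz: "max (vconj r k) (vconj t k) = max (Rf \<theta> k) (T k)" if "k < n" for k
    using that Rnz[OF thnz] Tnz by (simp add: vconj_def r_eq t_eq inv_nz)
  have row_eq: "row i = ssum (\<lambda>k. max (Rf \<theta> k) (T k) * kstar n B k i) {..<n}" for i
    unfolding row_def vmmult_def by (rule ssum_cong) (auto simp: zz)
  have rownz: "row i \<noteq> 0" if i: "i < n" for i
  proof -
    have "max (Rf \<theta> i) (T i) * kstar n B i i \<noteq> 0" using Tnz[OF i] Kdiag[OF i] by (intro mult_nz max_nz2)
    thus ?thesis unfolding row_eq using i ssum_nz[OF finite_lessThan, of i n "\<lambda>k. max (Rf \<theta> k) (T k) * kstar n B k i"] by simp
  qed
  have vb: "v i \<le> vconj row i \<longleftrightarrow> (\<forall>k<n. max (Rf \<theta> k) (T k) * kstar n B k i * v i \<le> 1)" if i: "i < n" for v i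
  proof -
    have "v i \<le> vconj row i \<longleftrightarrow> row i * v i \<le> 1" using rownz[OF i] by (simp add: vconj_def le_inv_iff)
    also have "\<dots> \<longleftrightarrow> (\<forall>k<n. max (Rf \<theta> k) (T k) * kstar n B k i * v i \<le> 1)"
      unfolding row_eq by (simp add: ssum1_le Ball_def)
    finally show ?thesis .
  qed
  have bwd: "feasible n m P d c B f g x \<and> objective n m P w h x = \<theta>"
    if "\<forall>i<n. max (q i) (s i) \<le> v i \<and> v i \<le> vconj row i"
     "\<forall>i<n. x i = rpw (mvmult n (kstar n B) v i) (1 / c i)" for x v
  proof -
    note hv = that(1) and hx = that(2)
    define yv where "yv = mvmult n (kstar n B) v"
    have yv_ge: "v i \<le> yv i" if "i < n" for i unfolding yv_def using kstar_ge[OF that] .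
    have yvnz: "yv i \<noteq> 0" if i: "i < n" for i
    proof -
      have "s i \<le> yv i" using hv i yv_ge[OF i] by (meson max.boundedE order_trans)
      thus ?thesis using snz[OF i] nz_lower by blast
    qed
    have xnz: "x i \<noteq> 0" if i: "i < n" for i using hx i yvnz[OF i] by (simp add: yv_def rpw_nz)
    have xr: "regular n x" using xnz by (simp add: regular_def)
    have Yx: "Y x i = yv i" if i: "i < n" for i
    proof -
      have "Y x i = rpw (yv i) (1 / c i * c i)" unfolding Y_def using hx i yvnz[OF i] by (simp add: yv_def rpw_rpw)
      also have "1 / c i * c i = 1" using cnz[OF i] by simp
      finally show ?thesis by (simp add: rpw_one)
    qed
    have Bc: "\<forall>i<n. \<forall>k<n. B i k * Y x k \<le> Y x i"
      using kstar_image_sub[OF tr] Yx unfolding yv_def by simp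
    have up: "max (Rf \<theta> i) (T i) * Y x i \<le> 1" if i: "i < n" for i
    proof -
      have "\<forall>k<n. max (Rf \<theta> i) (T i) * kstar n B i k * v k \<le> 1" using hv vb i by blast
      thus ?thesis unfolding Yx[OF i] yv_def mvmult_def by (simp add: ssum1r_le Ball_def mult.assoc)
    qed
    have lo: "max (Qf \<theta> i) (s i) \<le> Y x i" if i: "i < n" for i
      using hv i yv_ge[OF i] Yx[OF i] q_eq by (metis order_trans)
    have fx: "feasible n m P d c B f g x"
      unfolding feas_iff using xr Bc up lo by (simp add: max_mult_r)
    have "objective n m P w h x \<le> \<theta>"
      unfolding obj_iff[OF xr thnz] using up lo by (simp add: max_mult_r)
    thus ?thesis using fx min[OF fx] by simp
  qed
  have fwd: "\<exists>v. (\<forall>i<n. max (q i) (s i) \<le> v i \<and> v i \<le> vconj row i)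
       \<and> (\<forall>i<n. x i = rpw (mvmult n (kstar n B) v i) (1 / c i))"
    if "feasible n m P d c B f g x" "objective n m P w h x = \<theta>" for x
  proof (intro exI[of _ "Y x"] conjI allI impI)
    note fx = that(1) and ox = that(2)
    have xr: "regular n x" using fx feas_iff by blast
    have fe: "\<forall>i<n. s i \<le> Y x i \<and> T i * Y x i \<le> 1" using fx feas_iff by blast
    have ob: "\<forall>i<n. Qf \<theta> i \<le> Y x i \<and> Rf \<theta> i * Y x i \<le> 1" using obj_iff[OF xr thnz] ox by simp
    fix i assume i: "i < n"
    show "max (q i) (s i) \<le> Y x i" using fe ob i q_eq by simp
    show "Y x i \<le> vconj row i" unfolding vb[OF i]
    proof (intro allI impI)
      fix k assume k: "k < n"
      have "max (Rf \<theta> k) (T k) * Y x k \<le> 1" using fe ob k by (simp add: max_mult_r)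
      moreover have "kstar n B k i * Y x i \<le> Y x k" using Ksub[OF fx k i] .
      ultimately show "max (Rf \<theta> k) (T k) * kstar n B k i * Y x i \<le> 1" by (intro combo_le) auto
    qed
    have "mvmult n (kstar n B) (Y x) i = Y x i"
      using kstar_fix[of n B "Y x" i] i fx feas_iff by blast
    moreover have "rpw (Y x i) (1 / c i) = x i"
    proof -
      have "rpw (Y x i) (1 / c i) = rpw (x i) (c i * (1 / c i))"
        unfolding Y_def using xr i by (simp add: rpw_rpw regular_def)
      also have "c i * (1 / c i) = 1" using cnz[OF i] by simp
      finally show ?thesis by (simp add: rpw_one)
    qed
    ultimately show "x i = rpw (mvmult n (kstar n B) (Y x) i) (1 / c i)" by simp
  qed
  have hyp2: "T k * kstar n B k i * s i \<le> 1" if "k < n" "i < n" for k i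
  proof -
    note k = that(1) and i = that(2)
    have "\<forall>i<n. \<forall>k<n. vconj t k * kstar n B k i * s i \<le> 1"
      using assms(13) unfolding dotp_def vmmult_def by (simp add: ssum_le_iff ssum1_le Ball_def)
    moreover have "vconj t k = T k" using Tnz[OF k] by (simp add: vconj_def t_eq inv_nz)
    ultimately show ?thesis using k i by metis
  qed
  have four: "max a b * K * max c' d' \<le> 1"
    if "a * K * c' \<le> 1" "a * K * d' \<le> 1" "b * K * c' \<le> 1" "b * K * d' \<le> 1" for a b K c' d' :: 'a
    using that by (simp add: max_mult_r sf_distrib)
  define v0 where "v0 i = max (q i) (s i)" for i
  define x0 where "x0 i = rpw (mvmult n (kstar n B) v0 i) (1 / c i)" for i
  have v0b: "\<forall>i<n. max (q i) (s i) \<le> v0 i \<and> v0 i \<le> vconj row i"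
  proof (intro allI impI conjI)
    fix i assume i: "i < n"
    show "max (q i) (s i) \<le> v0 i" by (simp add: v0_def)
    have comb: "\<forall>i<n. \<forall>k<n. Rf \<theta> i * kstar n B i k * Qf \<theta> k \<le> 1
      \<and> Rf \<theta> i * kstar n B i k * s k \<le> 1 \<and> T i * kstar n B i k * Qf \<theta> k \<le> 1"
      using theta_iff[OF thnz] by simp
    show "v0 i \<le> vconj row i" unfolding vb[OF i, of v0]
    proof (intro allI impI)
      fix k assume k: "k < n"
      have "max (Rf \<theta> k) (T k) * kstar n B k i * max (Qf \<theta> i) (s i) \<le> 1"
        using comb k i hyp2[OF k i] by (intro four) auto
      thus "max (Rf \<theta> k) (T k) * kstar n B k i * v0 i \<le> 1" by (simp add: v0_def q_eq)
    qed
  qed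
  show ?thesis
    unfolding row_def[symmetric]
  proof (intro conjI allI impI)
    show "\<exists>x. feasible n m P d c B f g x \<and> objective n m P w h x = \<theta>"
      using bwd[OF v0b, of x0] by (auto simp: x0_def)
    show "\<theta> \<le> objective n m P w h x" if "feasible n m P d c B f g x" for x using min that by blast
    show "(feasible n m P d c B f g x \<and> objective n m P w h x = \<theta>) \<longleftrightarrow>
          (\<exists>v. (\<forall>i<n. max (q i) (s i) \<le> v i \<and> v i \<le> vconj row i)
             \<and> (\<forall>i<n. x i = rpw (mvmult n (kstar n B) v i) (1 / c i)))" for x
      using fwd bwd by blast
  qed
qed

end
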